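(* Let $d\ge 1$, let $g_k\in\mathbb{R}^d$ be a fixed (true) gradient vector, let $H_k\in\mathbb{R}^{d\times d}$ be a fixed matrix (an inverse Hessian approximation, not necessarily symmetric or positive definite), and let $\beta_k\in\mathbb{R}$ be fixed. Let $\widehat{g}_k = g_k + v_k$, where $v_k$ is a random vector with $\mathbb{E}[v_k]=0$ and $\mathbb{E}[v_k v_k^{\top}] = \sigma_g^2 I_d$ for some $\sigma_g^2\ge 0$. Define $p_k = -H_k g_k$ and $\widehat{p}_k = -H_k\widehat{g}_k$. If $$\beta_k > \frac{p_k^{\top} g_k - \sigma_g^2\,\mathrm{Tr}(H_k)}{g_k^{\top} g_k + d\,\sigma_g^2},$$ then $$\mathbb{E}\big[(\widehat{p}_k - \beta_k\widehat{g}_k)^{\top}\widehat{g}_k\big] < 0 .$$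
   Context: This concerns stochastic quasi-Newton optimisation of a function with gradient $g_k$ at iterate $x_k$, where only noisy gradient measurements $\widehat{g}_k$ are available; the search direction is $\widehat{p}_k=-H_k\widehat{g}_k$ and it is modified to $\widehat{p}_k-\beta_k\widehat{g}_k$ to obtain a descent direction in expectation. The expectation is taken over the gradient noise $v_k$, with $H_k$, $g_k$, $\beta_k$ treated as deterministic. Additionally assume $g_k^{\top}g_k + d\sigma_g^2>0$ so the bound is well defined. *)

theory Defs
  imports "HOL-Analysis.Analysis" "HOL-Probability.Probability"
begin

end

theory Submission
  imports Defs
begin

lemma delta_sum:
  fixes h X :: "'a::finite \<Rightarrow> real"
  shows "(\<Sum>j\<in>UNIV. (- h j - (if i = j then b else 0)) * X j) = - (\<Sum>j\<in>UNIV. h j * X j) - b * X i"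
proof -
  have "(\<Sum>j\<in>UNIV. (- h j - (if i = j then b else 0)) * X j)
     = (\<Sum>j\<in>UNIV. - (h j * X j) - (if i = j then b * X j else 0))"
    by (rule sum.cong) (auto simp: algebra_simps)
  also have "\<dots> = - (\<Sum>j\<in>UNIV. h j * X j) - b * X i"
    by (simp add: sum_subtractf sum_negf)
  finally show ?thesis .
qed

lemma integrand_eq:
  fixes g w :: "real ^ 'd" and H :: "real ^ 'd ^ 'd" and \<beta> :: real
  shows "(let ghat = g + w; phat = - (H *v ghat) in (phat - \<beta> *\<^sub>R ghat) \<bullet> ghat)
    = (\<Sum>i\<in>UNIV. \<Sum>j\<in>UNIV. (- H $ i $ j - (if i = j then \<beta> else 0)) * ((g $ j + w $ j) * (g $ i + w $ i)))"
proof -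
  have "(let ghat = g + w; phat = - (H *v ghat) in (phat - \<beta> *\<^sub>R ghat) \<bullet> ghat)
     = (\<Sum>i\<in>UNIV. (- (\<Sum>j\<in>UNIV. H $ i $ j * (g $ j + w $ j)) - \<beta> * (g $ i + w $ i)) * (g $ i + w $ i))"
    by (simp add: Let_def inner_vec_def matrix_vector_mult_def)
  also have "\<dots> = (\<Sum>i\<in>UNIV. \<Sum>j\<in>UNIV. (- H $ i $ j - (if i = j then \<beta> else 0)) * ((g $ j + w $ j) * (g $ i + w $ i)))"
  proof (rule sum.cong[OF refl])
    fix i
    show "(- (\<Sum>j\<in>UNIV. H $ i $ j * (g $ j + w $ j)) - \<beta> * (g $ i + w $ i)) * (g $ i + w $ i)
      = (\<Sum>j\<in>UNIV. (- H $ i $ j - (if i = j then \<beta> else 0)) * ((g $ j + w $ j) * (g $ i + w $ i)))"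
    proof -
      have e: "(\<Sum>j\<in>UNIV. H $ i $ j * ((g $ j + w $ j) * (g $ i + w $ i))) = (\<Sum>j\<in>UNIV. H $ i $ j * (g $ j + w $ j)) * (g $ i + w $ i)"
        by (simp add: sum_distrib_right mult.assoc)
      show ?thesis
        by (subst delta_sum[where h="\<lambda>j. H $ i $ j"], subst e) (simp add: left_diff_distrib)
    qed
  qed
  finally show ?thesis .
qed

theorem mainTheorem1:
  fixes M :: "'s measure"
    and g :: "real ^ 'd"
    and H :: "real ^ 'd ^ 'd"
    and \<beta> :: real
    and v :: "'s \<Rightarrow> real ^ 'd"
    and \<sigma>sq :: real
  assumes "prob_space M"
    and "v \<in> borel_measurable M"
    and "\<And>i. integrable M (\<lambda>\<omega>. v \<omega> $ i)"
    and "\<And>i. prob_space.expectation M (\<lambda>\<omega>. v \<omega> $ i) = 0"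
    and "\<And>i j. integrable M (\<lambda>\<omega>. v \<omega> $ i * v \<omega> $ j)"
    and "\<And>i j. prob_space.expectation M (\<lambda>\<omega>. v \<omega> $ i * v \<omega> $ j)
                 = (if i = j then \<sigma>sq else 0)"
    and "\<sigma>sq \<ge> 0"
    and "g \<bullet> g + real CARD('d) * \<sigma>sq > 0"
    and "\<beta> > ((- (H *v g)) \<bullet> g - \<sigma>sq * trace H) / (g \<bullet> g + real CARD('d) * \<sigma>sq)"
  shows "prob_space.expectation M
           (\<lambda>\<omega>. let ghat = g + v \<omega>; phat = - (H *v ghat) in (phat - \<beta> *\<^sub>R ghat) \<bullet> ghat) < 0"
proof -
  interpret prob_space M by fact
  note I1 = assms(3) and E1 = assms(4) and I2 = assms(5) and E2 = assms(6)
  have intc: "integrable M (\<lambda>\<omega>. c::real)" for c by simp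
  have pair_int: "integrable M (\<lambda>\<omega>. (g $ j + v \<omega> $ j) * (g $ i + v \<omega> $ i))" for i j
  proof -
    have "(\<lambda>\<omega>. (g $ j + v \<omega> $ j) * (g $ i + v \<omega> $ i)) =
      (\<lambda>\<omega>. g $ j * g $ i + g $ j * v \<omega> $ i + g $ i * v \<omega> $ j + v \<omega> $ j * v \<omega> $ i)"
      by (auto simp: algebra_simps)
    then show ?thesis using I1 I2 by simp
  qed
  have pair_E: "expectation (\<lambda>\<omega>. (g $ j + v \<omega> $ j) * (g $ i + v \<omega> $ i))
      = g $ j * g $ i + (if i = j then \<sigma>sq else 0)" for i j
  proof -
    have "(\<lambda>\<omega>. (g $ j + v \<omega> $ j) * (g $ i + v \<omega> $ i)) =
      (\<lambda>\<omega>. g $ j * g $ i + g $ j * v \<omega> $ i + g $ i * v \<omega> $ j + v \<omega> $ j * v \<omega> $ i)"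
      by (auto simp: algebra_simps)
    then have "expectation (\<lambda>\<omega>. (g $ j + v \<omega> $ j) * (g $ i + v \<omega> $ i))
       = g $ j * g $ i + g $ j * expectation (\<lambda>\<omega>. v \<omega> $ i) + g $ i * expectation (\<lambda>\<omega>. v \<omega> $ j)
         + expectation (\<lambda>\<omega>. v \<omega> $ j * v \<omega> $ i)"
      using I1 I2 by (simp add: prob_space)
    then show ?thesis using E1 E2 by (auto)
  qed
  define c where "c i j = (- H $ i $ j - (if i = j then \<beta> else 0))" for i j
  define D where "D = g \<bullet> g + real CARD('d) * \<sigma>sq"
  have "expectation (\<lambda>\<omega>. let ghat = g + v \<omega>; phat = - (H *v ghat) in (phat - \<beta> *\<^sub>R ghat) \<bullet> ghat)
    = expectation (\<lambda>\<omega>. \<Sum>i\<in>UNIV. \<Sum>j\<in>UNIV. c i j * ((g $ j + v \<omega> $ j) * (g $ i + v \<omega> $ i)))"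
    unfolding integrand_eq c_def ..
  also have "\<dots> = (\<Sum>i\<in>UNIV. \<Sum>j\<in>UNIV. c i j * (g $ j * g $ i + (if i = j then \<sigma>sq else 0)))"
    using pair_int by (simp add: pair_E)
  also have "\<dots> = (- (H *v g)) \<bullet> g - \<sigma>sq * trace H - \<beta> * D"
  proof -
    have "(\<Sum>i\<in>UNIV. \<Sum>j\<in>UNIV. c i j * (g $ j * g $ i + (if i = j then \<sigma>sq else 0)))
      = (\<Sum>i\<in>UNIV. - (\<Sum>j\<in>UNIV. H $ i $ j * g $ j) * g $ i - \<sigma>sq * H $ i $ i - \<beta> * (g $ i * g $ i + \<sigma>sq))"
    proof (rule sum.cong[OF refl])
      fix i
      have "(\<Sum>j\<in>UNIV. c i j * (g $ j * g $ i + (if i = j then \<sigma>sq else 0)))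
        = - (\<Sum>j\<in>UNIV. H $ i $ j * (g $ j * g $ i + (if i = j then \<sigma>sq else 0))) - \<beta> * (g $ i * g $ i + \<sigma>sq)"
        unfolding c_def by (subst delta_sum[where h="\<lambda>j. H $ i $ j"]) simp
      also have "(\<Sum>j\<in>UNIV. H $ i $ j * (g $ j * g $ i + (if i = j then \<sigma>sq else 0)))
         = (\<Sum>j\<in>UNIV. H $ i $ j * g $ j) * g $ i + \<sigma>sq * H $ i $ i"
        by (simp add: distrib_left sum.distrib sum_distrib_right if_distrib[where f="\<lambda>x. _ * x"] mult.assoc cong: if_cong)
      finally show "(\<Sum>j\<in>UNIV. c i j * (g $ j * g $ i + (if i = j then \<sigma>sq else 0)))
        = - (\<Sum>j\<in>UNIV. H $ i $ j * g $ j) * g $ i - \<sigma>sq * H $ i $ i - \<beta> * (g $ i * g $ i + \<sigma>sq)" by simp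
    qed
    also have "\<dots> = (- (H *v g)) \<bullet> g - \<sigma>sq * trace H - \<beta> * D"
      unfolding D_def trace_def inner_vec_def matrix_vector_mult_def
      by (simp add: sum_subtractf sum.distrib sum_distrib_left sum_negf algebra_simps)
    finally show ?thesis .
  qed
  also have "\<dots> < 0"
  proof -
    have "D > 0" using assms(8) D_def by simp
    then have "(- (H *v g)) \<bullet> g - \<sigma>sq * trace H < \<beta> * D"
      using assms(9) unfolding D_def[symmetric] by (simp add: divide_less_eq mult.commute)
    then show ?thesis by simp
  qed
  finally show ?thesis .
qed

end
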